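(* Let $G=(V,E)$ be a tree on a non-empty finite vertex set $V$, and let $\{A_v\}_{v\in V}$ be events in a probability space. Then \[ \Pr\Big(\bigcup_{v\in V} A_v\Big) \;\ge\; \frac{1}{\alpha(G)}\Big(\sum_{v\in V}\Pr(A_v) - \sum_{\{v,w\}\in E}\Pr(A_v\cap A_w)\Big). \]
   Context: $\alpha(G)$ denotes the independence number of $G$ (maximum size of a set of pairwise non-adjacent vertices). *)

theory Defs
  imports "HOL-Probability.Probability"
begin

definition simple_graph :: "'a set \<Rightarrow> 'a set set \<Rightarrow> bool" where
  "simple_graph V E \<longleftrightarrow> (\<forall>e\<in>E. \<exists>u v. e = {u, v} \<and> u \<noteq> v \<and> u \<in> V \<and> v \<in> V)"

definition walk :: "'a set set \<Rightarrow> 'a list \<Rightarrow> bool" where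
  "walk E xs \<longleftrightarrow> xs \<noteq> [] \<and> (\<forall>i < length xs - 1. {xs ! i, xs ! (i + 1)} \<in> E)"

definition graph_connected :: "'a set \<Rightarrow> 'a set set \<Rightarrow> bool" where
  "graph_connected V E \<longleftrightarrow>
     (\<forall>u\<in>V. \<forall>v\<in>V. \<exists>xs. walk E xs \<and> hd xs = u \<and> last xs = v)"

definition is_cycle :: "'a set set \<Rightarrow> 'a list \<Rightarrow> bool" where
  "is_cycle E xs \<longleftrightarrow> length xs \<ge> 3 \<and> distinct xs \<and> walk E xs \<and> {last xs, hd xs} \<in> E"

definition is_tree :: "'a set \<Rightarrow> 'a set set \<Rightarrow> bool" where
  "is_tree V E \<longleftrightarrow> simple_graph V E \<and> graph_connected V E \<and> \<not> (\<exists>xs. is_cycle E xs)"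

definition independent_set :: "'a set \<Rightarrow> 'a set set \<Rightarrow> 'a set \<Rightarrow> bool" where
  "independent_set V E S \<longleftrightarrow> S \<subseteq> V \<and> (\<forall>u\<in>S. \<forall>v\<in>S. {u, v} \<notin> E)"

definition independence_number :: "'a set \<Rightarrow> 'a set set \<Rightarrow> nat" where
  "independence_number V E = Max {card S | S. independent_set V E S}"

end

theory Submission
  imports Defs
begin

lemma edges_finite:
  assumes "simple_graph V E" "finite V"
  shows "finite E" and "\<And>e. e \<in> E \<Longrightarrow> e \<noteq> {} \<and> e \<subseteq> V \<and> finite e"
    and "\<And>u. {u} \<notin> E"
proof -
  have "E \<subseteq> Pow V" using assms(1) unfolding simple_graph_def by auto
  thus "finite E" using assms(2) by (simp add: finite_subset)
  show "\<And>e. e \<in> E \<Longrightarrow> e \<noteq> {} \<and> e \<subseteq> V \<and> finite e"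
    using assms(1) unfolding simple_graph_def by auto
  show "\<And>u. {u} \<notin> E"
  proof
    fix u assume "{u} \<in> E"
    then obtain a b where "{u} = {a,b}" "a \<noteq> b" using assms(1) unfolding simple_graph_def by metis
    then show False by auto
  qed
qed

lemma indep_bound:
  assumes G: "simple_graph V E" and fV: "finite V" and SV: "S \<subseteq> V"
  shows "\<exists>I. independent_set V E I \<and> I \<subseteq> S \<and> card S \<le> card I + card {e\<in>E. e \<subseteq> S}"
proof -
  have fE: "finite E" and noloop: "\<And>u. {u} \<notin> E" using edges_finite[OF G fV] by auto
  have fS: "finite S" using SV fV finite_subset by blast
  from fS SV show ?thesis
  proof (induction S rule: finite_induct)
    case empty
    then show ?case by (intro exI[of _ "{}"]) (auto simp: independent_set_def)
  next
    case (insert x F)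
    then obtain I where I: "independent_set V E I" "I \<subseteq> F"
      "card F \<le> card I + card {e\<in>E. e \<subseteq> F}" by auto
    define D where "D = {e\<in>E. e \<subseteq> insert x F \<and> x \<in> e}"
    have split: "{e\<in>E. e \<subseteq> insert x F} = {e\<in>E. e \<subseteq> F} \<union> D" unfolding D_def by blast
    have disj: "{e\<in>E. e \<subseteq> F} \<inter> D = {}" unfolding D_def using insert.hyps(2) by blast
    have fin1: "finite {e\<in>E. e \<subseteq> F}" "finite D" using fE unfolding D_def by auto
    have cardE: "card {e\<in>E. e \<subseteq> insert x F} = card {e\<in>E. e \<subseteq> F} + card D"
      using split disj fin1 card_Un_disjoint by metis
    have cins: "card (insert x F) = card F + 1" using insert.hyps by simp
    show ?case
    proof (cases "D = {}")
      case True
      have xV: "x \<in> V" using insert.prems by blast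
      have xI: "x \<notin> I" using I(2) insert.hyps(2) by blast
      have "independent_set V E (insert x I)"
        unfolding independent_set_def
      proof (intro conjI ballI)
        show "insert x I \<subseteq> V" using I(1) xV unfolding independent_set_def by blast
      next
        fix u v assume u: "u \<in> insert x I" and v: "v \<in> insert x I"
        show "{u, v} \<notin> E"
        proof (cases "u = x \<or> v = x")
          case True
          then show ?thesis
          proof
            assume ux: "u = x"
            show ?thesis
            proof
              assume "{u,v} \<in> E"
              moreover have "{u,v} \<subseteq> insert x F" using ux v I(2) by blast
              ultimately have "{u,v} \<in> D" unfolding D_def using ux by blast
              thus False using \<open>D = {}\<close> by blast
            qed
          next
            assume vx: "v = x"
            show ?thesis
            proof
              assume "{u,v} \<in> E"
              moreover have "{u,v} \<subseteq> insert x F" using vx u I(2) by blast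
              ultimately have "{u,v} \<in> D" unfolding D_def using vx by blast
              thus False using \<open>D = {}\<close> by blast
            qed
          qed
        next
          case False
          then have "u \<in> I" "v \<in> I" using u v by auto
          then show ?thesis using I(1) unfolding independent_set_def by blast
        qed
      qed
      moreover have "card (insert x I) = card I + 1"
        using xI I(2) fin1 insert.hyps(1) finite_subset by fastforce
      ultimately show ?thesis using I(2,3) cardE cins True
        by (intro exI[of _ "insert x I"]) auto
    next
      case False
      then have "card D \<ge> 1" using fin1(2) by (simp add: Suc_le_eq card_gt_0_iff)
      then show ?thesis using I cardE cins by (intro exI[of _ I]) auto
    qed
  qed
qed

theorem corollary1:
  fixes M :: "'b measure" and V :: "'a set" and E :: "'a set set" and A :: "'a \<Rightarrow> 'b set"
  assumes "prob_space M"
    and "finite V" and "V \<noteq> {}"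
    and "is_tree V E"
    and "\<And>v. v \<in> V \<Longrightarrow> A v \<in> sets M"
  shows "measure M (\<Union>v\<in>V. A v) \<ge>
           (1 / real (independence_number V E)) *
           ((\<Sum>v\<in>V. measure M (A v)) - (\<Sum>e\<in>E. measure M (\<Inter>v\<in>e. A v)))"
proof -
  interpret P: prob_space M by fact
  have G: "simple_graph V E" using assms(4) unfolding is_tree_def by blast
  have fE: "finite E" and Eprop: "\<And>e. e \<in> E \<Longrightarrow> e \<noteq> {} \<and> e \<subseteq> V \<and> finite e"
    and noloop: "\<And>u. {u} \<notin> E" using edges_finite[OF G assms(2)] by auto
  define \<alpha> where "\<alpha> = independence_number V E"
  have finC: "finite {card S | S. independent_set V E S}"
  proof (rule finite_subset[of _ "{..card V}"])
    show "{card S | S. independent_set V E S} \<subseteq> {..card V}"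
      using assms(2) card_mono unfolding independent_set_def by fastforce
  qed simp
  have le\<alpha>: "card I \<le> \<alpha>" if "independent_set V E I" for I
    unfolding \<alpha>_def independence_number_def using that finC by (intro Max_ge) auto
  obtain v0 where v0: "v0 \<in> V" using assms(3) by blast
  have "independent_set V E {v0}" using v0 noloop unfolding independent_set_def by auto
  then have a1: "\<alpha> \<ge> 1" using le\<alpha> by fastforce
  have AE: "(\<Inter>v\<in>e. A v) \<in> sets M" if "e \<in> E" for e
    using Eprop[OF that] assms(5) by (intro sets.finite_INT) auto
  have AU: "(\<Union>v\<in>V. A v) \<in> sets M" using assms(5) assms(2) by (intro sets.finite_UN) auto
  have pw: "(\<Sum>v\<in>V. indicator (A v) \<omega>) - (\<Sum>e\<in>E. indicator (\<Inter>v\<in>e. A v) \<omega>)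
      \<le> real \<alpha> * indicator (\<Union>v\<in>V. A v) \<omega>" for \<omega>
  proof -
    define S where "S = {v\<in>V. \<omega> \<in> A v}"
    have s1: "(\<Sum>v\<in>V. indicator (A v) \<omega> :: real) = real (card S)"
      unfolding S_def indicator_def using assms(2) by (simp add: sum.If_cases Int_def)
    have "(\<Sum>e\<in>E. indicator (\<Inter>v\<in>e. A v) \<omega> :: real) = (\<Sum>e\<in>E. if e \<subseteq> S then 1 else 0)"
    proof (rule sum.cong)
      fix e assume "e \<in> E"
      then show "indicator (\<Inter>v\<in>e. A v) \<omega> = (if e \<subseteq> S then 1 else (0::real))"
        using Eprop unfolding S_def indicator_def by auto
    qed simp
    also have "\<dots> = real (card {e\<in>E. e \<subseteq> S})"
      using fE by (simp add: sum.If_cases Int_def)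
    finally have s2: "(\<Sum>e\<in>E. indicator (\<Inter>v\<in>e. A v) \<omega> :: real) = real (card {e\<in>E. e \<subseteq> S})" .
    show ?thesis
    proof (cases "S = {}")
      case True
      then have "{e\<in>E. e \<subseteq> S} = {}" using Eprop by auto
      then have "(\<Sum>e\<in>E. indicator (\<Inter>v\<in>e. A v) \<omega> :: real) = 0"
        using s2 by (metis card.empty of_nat_0)
      moreover have "(\<Sum>v\<in>V. indicator (A v) \<omega> :: real) = 0" using s1 True by simp
      ultimately show ?thesis by simp
    next
      case False
      then have "\<omega> \<in> (\<Union>v\<in>V. A v)" unfolding S_def by blast
      then have ind1: "indicator (\<Union>v\<in>V. A v) \<omega> = (1::real)" by simp
      obtain I where I: "independent_set V E I" "card S \<le> card I + card {e\<in>E. e \<subseteq> S}"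
        using indep_bound[OF G assms(2), of S] unfolding S_def by auto
      have "card S \<le> \<alpha> + card {e\<in>E. e \<subseteq> S}" using I le\<alpha>[OF I(1)] by linarith
      then have "real (card S) \<le> real \<alpha> + real (card {e\<in>E. e \<subseteq> S})" by linarith
      then show ?thesis unfolding s1 s2 ind1 by simp
    qed
  qed
  have int: "integrable M (indicator X :: 'b \<Rightarrow> real)" if "X \<in> sets M" for X
    using that by (intro integrable_real_indicator) (auto simp: P.emeasure_finite less_top[symmetric])
  have mi: "(LINT \<omega>|M. indicator X \<omega>) = measure M X" if "X \<in> sets M" for X
    using that by (simp add: P.emeasure_finite less_top[symmetric])
  have iV: "integrable M (\<lambda>\<omega>. \<Sum>v\<in>V. indicator (A v) \<omega> :: real)"
    by (rule Bochner_Integration.integrable_sum) (simp add: int assms(5))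
  have iE: "integrable M (\<lambda>\<omega>. \<Sum>e\<in>E. indicator (\<Inter>v\<in>e. A v) \<omega> :: real)"
    by (rule Bochner_Integration.integrable_sum) (simp add: int AE)
  have eV: "(LINT \<omega>|M. (\<Sum>v\<in>V. indicator (A v) \<omega>)) = (\<Sum>v\<in>V. measure M (A v))"
    by (subst Bochner_Integration.integral_sum) (simp_all add: int assms(5) mi)
  have eE: "(LINT \<omega>|M. (\<Sum>e\<in>E. indicator (\<Inter>v\<in>e. A v) \<omega>)) = (\<Sum>e\<in>E. measure M (\<Inter>v\<in>e. A v))"
    by (subst Bochner_Integration.integral_sum) (simp_all add: int AE mi)
  have "(\<Sum>v\<in>V. measure M (A v)) - (\<Sum>e\<in>E. measure M (\<Inter>v\<in>e. A v))
      = (LINT \<omega>|M. (\<Sum>v\<in>V. indicator (A v) \<omega>) - (\<Sum>e\<in>E. indicator (\<Inter>v\<in>e. A v) \<omega>))"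
    using Bochner_Integration.integral_diff[OF iV iE] eV eE by simp
  also have "\<dots> \<le> (LINT \<omega>|M. real \<alpha> * indicator (\<Union>v\<in>V. A v) \<omega>)"
  proof (rule integral_mono)
    show "integrable M (\<lambda>\<omega>. (\<Sum>v\<in>V. indicator (A v) \<omega>) - (\<Sum>e\<in>E. indicator (\<Inter>v\<in>e. A v) \<omega> :: real))"
      using iV iE by (rule Bochner_Integration.integrable_diff)
    show "integrable M (\<lambda>\<omega>. real \<alpha> * indicator (\<Union>v\<in>V. A v) \<omega>)"
      using int[OF AU] by (rule integrable_mult_right)
  qed (rule pw)
  also have "\<dots> = real \<alpha> * measure M (\<Union>v\<in>V. A v)"
    using AU mi by simp
  finally have "(\<Sum>v\<in>V. measure M (A v)) - (\<Sum>e\<in>E. measure M (\<Inter>v\<in>e. A v))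
      \<le> real \<alpha> * measure M (\<Union>v\<in>V. A v)" .
  then show ?thesis using a1 unfolding \<alpha>_def[symmetric]
    by (simp add: divide_le_eq mult.commute)
qed

end
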